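(* Let $\gamma>0$, $\theta\in\mathbb R^d$ and $\mathcal X\subseteq\mathbb R^d$. For $x\in\mathcal X$ and $y\in\{0,1,2,\dots\}$ define $$w_\gamma(x,y,\theta)=\exp\Big[\gamma y\,\theta^\top x-\frac{\gamma}{\gamma+1}\exp\{(\gamma+1)\theta^\top x\}\Big],\qquad S_\gamma(\theta,x,y)=w_\gamma(x,y,\theta)\big[y-\exp\{(\gamma+1)\theta^\top x\}\big]x,$$ and $\Phi_\gamma(x,y,\theta)=\theta^\top S_\gamma(\theta,x,y)$. Then for every fixed $y\in\{0,1,2,\dots\}$, $\sup_{x\in\mathcal X}|\Phi_\gamma(x,y,\theta)|<\infty$.
   Context: $S_\gamma$ is the $\gamma$-estimating score for the Poisson log-linear regression model $p(y|x,\theta)=\frac1{y!}\exp\{y\theta^\top x-\exp(\theta^\top x)\}$, computed with the reference measure having mass $1/y!$ at $y$. *)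

theory Defs
  imports "HOL-Analysis.Analysis"
begin

text \<open>Weight of the gamma-estimating score for the Poisson log-linear model,
  with theta, x in R^d rendered as real^'n (d = CARD('n)).\<close>

definition w_gamma :: "real \<Rightarrow> real^'n \<Rightarrow> nat \<Rightarrow> real^'n \<Rightarrow> real" where
  "w_gamma \<gamma> x y \<theta> =
     exp (\<gamma> * real y * (\<theta> \<bullet> x) - \<gamma> / (\<gamma> + 1) * exp ((\<gamma> + 1) * (\<theta> \<bullet> x)))"

definition S_gamma :: "real \<Rightarrow> real^'n \<Rightarrow> real^'n \<Rightarrow> nat \<Rightarrow> real^'n" where
  "S_gamma \<gamma> \<theta> x y =
     (w_gamma \<gamma> x y \<theta> * (real y - exp ((\<gamma> + 1) * (\<theta> \<bullet> x)))) *\<^sub>R x"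

definition Phi_gamma :: "real \<Rightarrow> real^'n \<Rightarrow> nat \<Rightarrow> real^'n \<Rightarrow> real" where
  "Phi_gamma \<gamma> x y \<theta> = \<theta> \<bullet> S_gamma \<gamma> \<theta> x y"

end

theory Submission
  imports Defs "HOL-Real_Asymp.Real_Asymp"
begin

lemma bounded_from_limits:
  fixes f :: "real \<Rightarrow> real"
  assumes c: "continuous_on UNIV f" and t: "(f \<longlongrightarrow> 0) at_top" and b: "(f \<longlongrightarrow> 0) at_bot"
  shows "\<exists>B. \<forall>t. \<bar>f t\<bar> \<le> B"
proof -
  have "eventually (\<lambda>t. dist (f t) 0 < 1) at_top" using t by (simp add: tendsto_iff)
  then obtain M where M: "\<And>t. t \<ge> M \<Longrightarrow> \<bar>f t\<bar> < 1" by (auto simp: eventually_at_top_linorder)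
  have "eventually (\<lambda>t. dist (f t) 0 < 1) at_bot" using b by (simp add: tendsto_iff)
  then obtain N where N: "\<And>t. t \<le> N \<Longrightarrow> \<bar>f t\<bar> < 1" by (auto simp: eventually_at_bot_linorder)
  have "compact (f ` {N..M})"
    by (rule compact_continuous_image) (auto intro: continuous_on_subset[OF c])
  then obtain K where K: "\<And>z. z \<in> f ` {N..M} \<Longrightarrow> norm z \<le> K"
    using compact_imp_bounded bounded_iff by metis
  have "\<bar>f t\<bar> \<le> max 1 K" for t
  proof (cases "t \<ge> M")
    case True then show ?thesis using M[of t] by auto
  next
    case False
    show ?thesis
    proof (cases "t \<le> N")
      case True then show ?thesis using N[of t] by auto
    next
      case False2: False
      then have "t \<in> {N..M}" using False by auto
      then show ?thesis using K[of "f t"] by auto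
    qed
  qed
  then show ?thesis by blast
qed

lemma aux1: "(b::real) > 0 \<Longrightarrow> ((\<lambda>t::real. t * exp (b * t)) \<longlongrightarrow> 0) at_bot"
  by real_asymp

lemma lim_bot:
  assumes "\<gamma> > 0" "(Y::real) \<ge> 0"
  shows "((\<lambda>t::real. t * exp (\<gamma> * Y * t - \<gamma> / (\<gamma> + 1) * exp ((\<gamma> + 1) * t)) * (Y - exp ((\<gamma> + 1) * t))) \<longlongrightarrow> 0) at_bot"
proof -
  have 2: "((\<lambda>t::real. exp (- (\<gamma> / (\<gamma> + 1) * exp ((\<gamma> + 1) * t)))) \<longlongrightarrow> 1) at_bot"
    using assms by real_asymp
  have 1: "((\<lambda>t::real. t * exp ((\<gamma> * Y + (\<gamma> + 1)) * t)) \<longlongrightarrow> 0) at_bot"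
    by (rule aux1) (use assms in \<open>simp add: add_nonneg_pos\<close>)
  have 3: "((\<lambda>t::real. Y * (t * exp ((\<gamma> * Y) * t))) \<longlongrightarrow> 0) at_bot"
  proof (cases "Y = 0")
    case True then show ?thesis by simp
  next
    case False then have "\<gamma> * Y > 0" using assms by simp
    from tendsto_mult_left[OF aux1[OF this], of Y] show ?thesis by simp
  qed
  have "((\<lambda>t::real. (Y * (t * exp ((\<gamma> * Y) * t)) - t * exp ((\<gamma> * Y + (\<gamma> + 1)) * t)) * exp (- (\<gamma> / (\<gamma> + 1) * exp ((\<gamma> + 1) * t)))) \<longlongrightarrow> (0 - 0) * 1) at_bot"
    by (intro tendsto_mult tendsto_diff 1 2 3)
  moreover have "(\<lambda>t::real. (Y * (t * exp ((\<gamma> * Y) * t)) - t * exp ((\<gamma> * Y + (\<gamma> + 1)) * t)) * exp (- (\<gamma> / (\<gamma> + 1) * exp ((\<gamma> + 1) * t))))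
     = (\<lambda>t. t * exp (\<gamma> * Y * t - \<gamma> / (\<gamma> + 1) * exp ((\<gamma> + 1) * t)) * (Y - exp ((\<gamma> + 1) * t)))"
  proof (rule ext)
    fix t :: real
    have e1: "exp ((\<gamma> * Y + (\<gamma> + 1)) * t) = exp (\<gamma> * Y * t) * exp ((\<gamma> + 1) * t)"
      by (simp add: distrib_right exp_add)
    have e2: "exp (\<gamma> * Y * t - \<gamma> / (\<gamma> + 1) * exp ((\<gamma> + 1) * t)) = exp (\<gamma> * Y * t) * exp (- (\<gamma> / (\<gamma> + 1) * exp ((\<gamma> + 1) * t)))"
      by (simp add: exp_add[symmetric])
    show "(Y * (t * exp ((\<gamma> * Y) * t)) - t * exp ((\<gamma> * Y + (\<gamma> + 1)) * t)) * exp (- (\<gamma> / (\<gamma> + 1) * exp ((\<gamma> + 1) * t)))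
       = t * exp (\<gamma> * Y * t - \<gamma> / (\<gamma> + 1) * exp ((\<gamma> + 1) * t)) * (Y - exp ((\<gamma> + 1) * t))"
      unfolding e1 e2 by (simp add: algebra_simps)
  qed
  ultimately show ?thesis by simp
qed

lemma lim_pos_top:
  assumes "\<gamma> > 0" "(Y::real) > 0"
  shows "((\<lambda>t::real. t * exp (\<gamma> * Y * t - \<gamma> / (\<gamma> + 1) * exp ((\<gamma> + 1) * t)) * (Y - exp ((\<gamma> + 1) * t))) \<longlongrightarrow> 0) at_top"
  using assms by real_asymp

lemma lim_zero_top:
  assumes "\<gamma> > 0"
  shows "((\<lambda>t::real. t * exp (\<gamma> * 0 * t - \<gamma> / (\<gamma> + 1) * exp ((\<gamma> + 1) * t)) * (0 - exp ((\<gamma> + 1) * t))) \<longlongrightarrow> 0) at_top"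
  using assms by real_asymp

lemma g_bounded:
  assumes "\<gamma> > 0"
  shows "\<exists>B. \<forall>t::real. \<bar>t * exp (\<gamma> * real y * t - \<gamma> / (\<gamma> + 1) * exp ((\<gamma> + 1) * t)) * (real y - exp ((\<gamma> + 1) * t))\<bar> \<le> B"
proof (rule bounded_from_limits)
  show "continuous_on UNIV (\<lambda>t::real. t * exp (\<gamma> * real y * t - \<gamma> / (\<gamma> + 1) * exp ((\<gamma> + 1) * t)) * (real y - exp ((\<gamma> + 1) * t)))"
    by (intro continuous_intros)
  show "((\<lambda>t::real. t * exp (\<gamma> * real y * t - \<gamma> / (\<gamma> + 1) * exp ((\<gamma> + 1) * t)) * (real y - exp ((\<gamma> + 1) * t))) \<longlongrightarrow> 0) at_top"
  proof (cases "y = 0")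
    case True then show ?thesis using lim_zero_top[OF assms] by simp
  next
    case False then show ?thesis using lim_pos_top[OF assms, of "real y"] by simp
  qed
  show "((\<lambda>t::real. t * exp (\<gamma> * real y * t - \<gamma> / (\<gamma> + 1) * exp ((\<gamma> + 1) * t)) * (real y - exp ((\<gamma> + 1) * t))) \<longlongrightarrow> 0) at_bot"
  proof (cases "y = 0")
    case True then show ?thesis using lim_bot[OF assms, of 0] by simp
  next
    case False then show ?thesis using lim_bot[OF assms, of "real y"] by simp
  qed
qed

theorem mainTheorem9:
  fixes \<gamma> :: real and \<theta> :: "real^'n" and X :: "(real^'n) set" and y :: nat
  assumes "\<gamma> > 0"
  shows "bdd_above ((\<lambda>x. \<bar>Phi_gamma \<gamma> x y \<theta>\<bar>) ` X)"
proof -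
  obtain B where B: "\<And>t::real. \<bar>t * exp (\<gamma> * real y * t - \<gamma> / (\<gamma> + 1) * exp ((\<gamma> + 1) * t)) * (real y - exp ((\<gamma> + 1) * t))\<bar> \<le> B"
    using g_bounded[OF assms] by blast
  have "\<bar>Phi_gamma \<gamma> x y \<theta>\<bar> \<le> B" for x
  proof -
    have "Phi_gamma \<gamma> x y \<theta> = (\<theta> \<bullet> x) * exp (\<gamma> * real y * (\<theta> \<bullet> x) - \<gamma> / (\<gamma> + 1) * exp ((\<gamma> + 1) * (\<theta> \<bullet> x))) * (real y - exp ((\<gamma> + 1) * (\<theta> \<bullet> x)))"
      by (simp add: Phi_gamma_def S_gamma_def w_gamma_def inner_scaleR_right)
    then show ?thesis using B[of "\<theta> \<bullet> x"] by simp
  qed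
  then show ?thesis by (intro bdd_aboveI2) auto
qed

end
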